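(* Let $N_1,N_2,\chi>0$, $\alpha=\pi(\sqrt{N_2/\pi}+N_1/2)^2$, $\beta=\alpha/\sqrt{\pi N_2}$, $\tau=\sqrt{\pi N_2}N_1$, $\rho=1+N_2/\tau$, and let $S(\phi)=\frac{\phi}{\tau}\ln\frac{\alpha\phi}{\tau}+\frac{\phi}{N_1}\ln\frac{\beta\phi}{\tau}+(1-\rho\phi)\ln(1-\rho\phi)$, $H(\phi)=\chi\phi(1-\rho\phi)$, $\kappa(\phi)=\frac{1}{36\phi(1-\phi)}$. For grid functions $\phi\in\mathcal{C}_{\rm per}$ with $0<\phi_{i,j}<1/\rho$ for all $i,j$, define $F(\phi)=h^2\sum_{i,j=1}^N\big(S(\phi_{i,j})+H(\phi_{i,j})+\kappa(\phi_{i,j})(a_x((D_x\phi)^2)_{i,j}+a_y((D_y\phi)^2)_{i,j})\big)$, $F_S(\phi)=h^2\sum_{i,j}S(\phi_{i,j})$, $F_H(\phi)=F_e(\phi)=-h^2\sum_{i,j}H(\phi_{i,j})$, $F_{K_1}(\phi)=h^2\sum_{i,j}(\kappa(\phi_{i,j})-\tfrac1{36})(a_x((D_x\phi)^2)_{i,j}+a_y((D_y\phi)^2)_{i,j})$, $F_{K_2}(\phi)=\frac{1}{36}\|\nabla_h\phi\|_2^2$, and $F_c=F_S+F_{K_1}+F_{K_2}$. Then $$F(\phi)=F_c(\phi)-F_e(\phi)=F_S(\phi)+F_{K_1}(\phi)+F_{K_2}(\phi)-F_H(\phi),$$ and each of $F_c,F_e,F_S,F_{K_1},F_{K_2},F_H$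 is convex (on the convex set of grid functions with values in $(0,1/\rho)$).
   Context: Let $\Omega=(0,L)^2$, $N\in\mathbb{N}$, $h=L/N$. $\mathcal{C}_{\rm per}$ is the space of real grid functions $\nu_{i,j}$, $i,j\in\mathbb{Z}$, that are $N$-periodic in each index (values at cell centers $((i-\frac12)h,(j-\frac12)h)$). For $\nu\in\mathcal{C}_{\rm per}$ define on edges $D_x\nu_{i+1/2,j}=(\nu_{i+1,j}-\nu_{i,j})/h$, $D_y\nu_{i,j+1/2}=(\nu_{i,j+1}-\nu_{i,j})/h$, $A_x\nu_{i+1/2,j}=(\nu_{i+1,j}+\nu_{i,j})/2$ (similarly $A_y$); for edge functions $f$ define $a_xf_{i,j}=(f_{i+1/2,j}+f_{i-1/2,j})/2$, $d_xf_{i,j}=(f_{i+1/2,j}-f_{i-1/2,j})/h$ (similarly $a_y,d_y$). $\|\nabla_h\nu\|_2^2=h^2\sum_{i,j=1}^N\big(a_x((D_x\nu)^2)_{i,j}+a_y((D_y\nu)^2)_{i,j}\big)$. *)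

theory Defs
  imports Complex_Main
begin

text \<open>Grid functions on Z x Z; nu i j is the value at cell centre ((i-1/2)h,(j-1/2)h).
 Edge functions at (i+1/2, j) are indexed by i (resp. (i, j+1/2) by j).\<close>

type_synonym grid = "int \<Rightarrow> int \<Rightarrow> real"

definition per_grid :: "nat \<Rightarrow> grid \<Rightarrow> bool" where
  "per_grid N \<nu> \<longleftrightarrow> (\<forall>i j. \<nu> (i + int N) j = \<nu> i j \<and> \<nu> i (j + int N) = \<nu> i j)"

definition Cper :: "nat \<Rightarrow> grid set" where
  "Cper N = {\<nu>. per_grid N \<nu>}"

definition hstep :: "real \<Rightarrow> nat \<Rightarrow> real" where
  "hstep L N = L / real N"

definition Dx :: "real \<Rightarrow> grid \<Rightarrow> grid" where
  "Dx h \<nu> i j = (\<nu> (i+1) j - \<nu> i j) / h"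
definition Dy :: "real \<Rightarrow> grid \<Rightarrow> grid" where
  "Dy h \<nu> i j = (\<nu> i (j+1) - \<nu> i j) / h"
definition Ax :: "grid \<Rightarrow> grid" where
  "Ax \<nu> i j = (\<nu> (i+1) j + \<nu> i j) / 2"
definition Ay :: "grid \<Rightarrow> grid" where
  "Ay \<nu> i j = (\<nu> i (j+1) + \<nu> i j) / 2"
definition ax :: "grid \<Rightarrow> grid" where
  "ax f i j = (f i j + f (i-1) j) / 2"
definition ay :: "grid \<Rightarrow> grid" where
  "ay f i j = (f i j + f i (j-1)) / 2"
definition dx :: "real \<Rightarrow> grid \<Rightarrow> grid" where
  "dx h f i j = (f i j - f (i-1) j) / h"
definition dy :: "real \<Rightarrow> grid \<Rightarrow> grid" where
  "dy h f i j = (f i j - f i (j-1)) / h"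

definition gsum :: "nat \<Rightarrow> (int \<Rightarrow> int \<Rightarrow> real) \<Rightarrow> real" where
  "gsum N g = (\<Sum>i\<in>{1..int N}. \<Sum>j\<in>{1..int N}. g i j)"

definition gradsq :: "real \<Rightarrow> grid \<Rightarrow> grid" where
  "gradsq h \<nu> i j = ax (\<lambda>a b. (Dx h \<nu> a b)^2) i j + ay (\<lambda>a b. (Dy h \<nu> a b)^2) i j"

definition grad_norm_sq :: "real \<Rightarrow> nat \<Rightarrow> grid \<Rightarrow> real" where
  "grad_norm_sq L N \<nu> = (hstep L N)^2 *
     gsum N (\<lambda>i j. ax (\<lambda>a b. (Dx (hstep L N) \<nu> a b)^2) i j + ay (\<lambda>a b. (Dy (hstep L N) \<nu> a b)^2) i j)"

definition alpha :: "real \<Rightarrow> real \<Rightarrow> real" where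
  "alpha N1 N2 = pi * (sqrt (N2 / pi) + N1 / 2)^2"
definition beta :: "real \<Rightarrow> real \<Rightarrow> real" where
  "beta N1 N2 = alpha N1 N2 / sqrt (pi * N2)"
definition tau :: "real \<Rightarrow> real \<Rightarrow> real" where
  "tau N1 N2 = sqrt (pi * N2) * N1"
definition rho :: "real \<Rightarrow> real \<Rightarrow> real" where
  "rho N1 N2 = 1 + N2 / tau N1 N2"

definition Sfun :: "real \<Rightarrow> real \<Rightarrow> real \<Rightarrow> real" where
  "Sfun N1 N2 \<phi> =
     \<phi> / tau N1 N2 * ln (alpha N1 N2 * \<phi> / tau N1 N2)
   + \<phi> / N1 * ln (beta N1 N2 * \<phi> / tau N1 N2)
   + (1 - rho N1 N2 * \<phi>) * ln (1 - rho N1 N2 * \<phi>)"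
definition Hfun :: "real \<Rightarrow> real \<Rightarrow> real \<Rightarrow> real \<Rightarrow> real" where
  "Hfun N1 N2 \<chi> \<phi> = \<chi> * \<phi> * (1 - rho N1 N2 * \<phi>)"
definition kappa :: "real \<Rightarrow> real" where
  "kappa \<phi> = 1 / (36 * \<phi> * (1 - \<phi>))"

definition Adm :: "real \<Rightarrow> real \<Rightarrow> nat \<Rightarrow> grid set" where
  "Adm N1 N2 N = {\<phi> \<in> Cper N. \<forall>i j. 0 < \<phi> i j \<and> \<phi> i j < 1 / rho N1 N2}"

definition Fen :: "real \<Rightarrow> real \<Rightarrow> real \<Rightarrow> real \<Rightarrow> nat \<Rightarrow> grid \<Rightarrow> real" where
  "Fen N1 N2 \<chi> L N \<phi> = (hstep L N)^2 * gsum N (\<lambda>i j.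
      Sfun N1 N2 (\<phi> i j) + Hfun N1 N2 \<chi> (\<phi> i j) + kappa (\<phi> i j) * gradsq (hstep L N) \<phi> i j)"
definition FS :: "real \<Rightarrow> real \<Rightarrow> real \<Rightarrow> nat \<Rightarrow> grid \<Rightarrow> real" where
  "FS N1 N2 L N \<phi> = (hstep L N)^2 * gsum N (\<lambda>i j. Sfun N1 N2 (\<phi> i j))"
definition FH :: "real \<Rightarrow> real \<Rightarrow> real \<Rightarrow> real \<Rightarrow> nat \<Rightarrow> grid \<Rightarrow> real" where
  "FH N1 N2 \<chi> L N \<phi> = - ((hstep L N)^2 * gsum N (\<lambda>i j. Hfun N1 N2 \<chi> (\<phi> i j)))"
definition Fe :: "real \<Rightarrow> real \<Rightarrow> real \<Rightarrow> real \<Rightarrow> nat \<Rightarrow> grid \<Rightarrow> real" where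
  "Fe N1 N2 \<chi> L N \<phi> = - ((hstep L N)^2 * gsum N (\<lambda>i j. Hfun N1 N2 \<chi> (\<phi> i j)))"
definition FK1 :: "real \<Rightarrow> nat \<Rightarrow> grid \<Rightarrow> real" where
  "FK1 L N \<phi> = (hstep L N)^2 * gsum N (\<lambda>i j. (kappa (\<phi> i j) - 1/36) * gradsq (hstep L N) \<phi> i j)"
definition FK2 :: "real \<Rightarrow> nat \<Rightarrow> grid \<Rightarrow> real" where
  "FK2 L N \<phi> = 1/36 * grad_norm_sq L N \<phi>"
definition Fc :: "real \<Rightarrow> real \<Rightarrow> real \<Rightarrow> nat \<Rightarrow> grid \<Rightarrow> real" where
  "Fc N1 N2 L N \<phi> = FS N1 N2 L N \<phi> + FK1 L N \<phi> + FK2 L N \<phi>"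

definition convex_grid_set :: "grid set \<Rightarrow> bool" where
  "convex_grid_set D \<longleftrightarrow> (\<forall>\<phi>\<in>D. \<forall>\<psi>\<in>D. \<forall>t::real. 0 \<le> t \<and> t \<le> 1 \<longrightarrow>
      (\<lambda>i j. (1 - t) * \<phi> i j + t * \<psi> i j) \<in> D)"
definition convex_grid_fun :: "grid set \<Rightarrow> (grid \<Rightarrow> real) \<Rightarrow> bool" where
  "convex_grid_fun D F \<longleftrightarrow> (\<forall>\<phi>\<in>D. \<forall>\<psi>\<in>D. \<forall>t::real. 0 \<le> t \<and> t \<le> 1 \<longrightarrow>
      F (\<lambda>i j. (1 - t) * \<phi> i j + t * \<psi> i j) \<le> (1 - t) * F \<phi> + t * F \<psi>)"

end

theory Submission imports Defs begin

lemma xlnx_tangent: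
  fixes x y :: real assumes "0 < x" "0 < y"
  shows "x * ln x + (ln x + 1) * (y - x) \<le> y * ln y"
proof -
  have "ln (x / y) \<le> x / y - 1" using assms by (intro ln_le_minus_one) auto
  hence "ln x - ln y \<le> x / y - 1" using assms by (simp add: ln_div)
  hence "y * (ln x - ln y) \<le> y * (x / y - 1)" using assms by (intro mult_left_mono) auto
  hence "y * ln x - y * ln y \<le> x - y" using assms by (simp add: algebra_simps)
  thus ?thesis by (simp add: algebra_simps)
qed

lemma tangent_comb:
  fixes f f' :: "real \<Rightarrow> real"
  assumes tan: "\<And>u v. P u \<Longrightarrow> P v \<Longrightarrow> f u + f' u * (v - u) \<le> f v"
    and "P x" "P y" "P ((1-t)*x + t*y)" "0 \<le> t" "t \<le> 1"
  shows "f ((1-t)*x + t*y) \<le> (1-t) * f x + t * f y"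
proof -
  define z where "z = (1-t)*x + t*y"
  have a: "f z + f' z * (x - z) \<le> f x" using tan assms z_def by blast
  have b: "f z + f' z * (y - z) \<le> f y" using tan assms z_def by blast
  have "(1-t) * (f z + f' z * (x - z)) \<le> (1-t) * f x" using a assms by (intro mult_left_mono) auto
  moreover have "t * (f z + f' z * (y - z)) \<le> t * f y" using b assms by (intro mult_left_mono) auto
  moreover have "(1-t) * (f z + f' z * (x - z)) + t * (f z + f' z * (y - z)) = f z"
    unfolding z_def by (simp add: algebra_simps)
  ultimately show ?thesis unfolding z_def by linarith
qed

lemma piece1_tan:
  fixes A B C x y :: real assumes "A > 0" "B > 0" "C > 0" "x > 0" "y > 0"
  shows "x / A * ln (B * x / C) + (ln (B * x / C) + 1) / A * (y - x) \<le> y / A * ln (B * y / C)"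
proof -
  define u where "u = B*x/C"
  define v where "v = B*y/C"
  have "u * ln u + (ln u + 1) * (v - u) \<le> v * ln v"
    using assms unfolding u_def v_def by (intro xlnx_tangent) auto
  hence "C/(A*B) * (u * ln u + (ln u + 1) * (v - u)) \<le> C/(A*B) * (v * ln v)"
    using assms by (intro mult_left_mono) auto
  moreover have "C/(A*B) * (u * ln u + (ln u + 1) * (v - u)) = x / A * ln u + (ln u + 1) / A * (y - x)"
    using assms unfolding u_def v_def by (simp add: field_simps)
  moreover have "C/(A*B) * (v * ln v) = y / A * ln v"
    using assms unfolding v_def by (simp add: field_simps)
  ultimately show ?thesis unfolding u_def v_def by simp
qed

lemma piece3_tan:
  fixes r x y :: real assumes "1 - r*x > 0" "1 - r*y > 0"
  shows "(1 - r*x) * ln (1 - r*x) + (- r * (ln (1 - r*x) + 1)) * (y - x) \<le> (1 - r*y) * ln (1 - r*y)"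
proof -
  have "(1 - r*x) * ln (1 - r*x) + (ln (1 - r*x) + 1) * ((1 - r*y) - (1 - r*x)) \<le> (1 - r*y) * ln (1 - r*y)"
    using assms by (intro xlnx_tangent) auto
  thus ?thesis by (simp add: algebra_simps)
qed

definition qf :: "real \<Rightarrow> real" where "qf x = x*(1-x)/(1 - x*(1-x))"

lemma qf_tan:
  fixes x y :: real assumes "0 < x" "x < 1" "0 < y" "y < 1"
  shows "qf y \<le> qf x + (1 - 2*x)/(1 - x*(1-x))^2 * (y - x)"
proof -
  define r where "r = (\<lambda>u::real. u*u - u + 1)"
  have rpos: "r u > 0" for u proof -
    have "r u = (u - 1/2)^2 + 3/4" unfolding r_def by (simp add: algebra_simps power2_eq_square)
    thus ?thesis by (metis add_nonneg_pos zero_le_power2 zero_less_divide_iff zero_less_numeral)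
  qed
  have qr: "qf u = 1 / r u - 1" for u using rpos[of u] unfolding qf_def r_def by (simp add: field_simps)
  have key: "r x ^ 2 - r x * r y + (2*x-1)*(y-x)*r y = (y-x)^2 * (x*x - 2*x + 2*x*y - y)"
    unfolding r_def by (simp add: algebra_simps power2_eq_square)
  have neg: "x*x - 2*x + 2*x*y - y \<le> 0"
  proof (cases "2*x - 1 \<ge> 0")
    case True
    hence "(2*x-1)*y \<le> (2*x-1)*1" using assms by (intro mult_left_mono) auto
    moreover have "x*x < 1" using assms mult_strict_mono[of x 1 x 1] by simp
    ultimately show ?thesis by (simp add: algebra_simps)
  next
    case False
    hence "(2*x-1)*y \<le> 0" using assms by (simp add: mult_nonpos_nonneg)
    moreover have "x*x < 2*x" using assms by (simp add: mult_strict_right_mono)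
    ultimately show ?thesis by (simp add: algebra_simps)
  qed
  have "r x ^ 2 - r x * r y + (2*x-1)*(y-x)*r y \<le> 0" using key neg
    by (simp add: mult_nonneg_nonpos)
  hence h: "r x ^ 2 \<le> r x * r y - (2*x-1)*(y-x)*r y" by linarith
  have "1 / r y \<le> 1 / r x - (2*x-1)*(y-x) / (r x)^2"
    using h rpos[of x] rpos[of y] by (simp add: field_simps power2_eq_square)
  moreover have "1 - x*(1-x) = r x" unfolding r_def by (simp add: algebra_simps)
  moreover have "(1 - 2*x)/(r x)^2 * (y - x) = - ((2*x-1)*(y-x) / (r x)^2)"
    by (simp add: divide_simps) (simp add: algebra_simps)
  ultimately show ?thesis unfolding qr by simp
qed

lemma persp:
  fixes q1 q2 d1 d2 t :: real assumes "q1 > 0" "q2 > 0" "0 \<le> t" "t \<le> 1"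
  shows "((1-t)*d1 + t*d2)^2 / ((1-t)*q1 + t*q2) \<le> (1-t)*d1^2/q1 + t*d2^2/q2"
proof -
  have Q: "(1-t)*q1 + t*q2 > 0" using assms
    by (cases "t = 0") (auto intro: add_nonneg_pos add_pos_nonneg)
  have "(1-t)*d1^2/q1 + t*d2^2/q2 - ((1-t)*d1 + t*d2)^2 / ((1-t)*q1 + t*q2)
     = (1-t)*t*(d1*q2 - d2*q1)^2 / (q1*q2*((1-t)*q1 + t*q2))"
    using assms Q by (simp add: field_simps power2_eq_square)
  moreover have "(1-t)*t*(d1*q2 - d2*q1)^2 / (q1*q2*((1-t)*q1 + t*q2)) \<ge> 0"
    using assms Q by (intro divide_nonneg_pos mult_nonneg_nonneg) auto
  ultimately show ?thesis by linarith
qed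


lemma comb_between:
  fixes lo hi a b t :: real
  assumes "lo < a" "a < hi" "lo < b" "b < hi" "0 \<le> t" "t \<le> 1"
  shows "lo < (1-t)*a + t*b \<and> (1-t)*a + t*b < hi"
proof -
  have e1: "(1-t)*a + t*b - lo = (1-t)*(a-lo) + t*(b-lo)" by (simp add: algebra_simps)
  have e2: "hi - ((1-t)*a + t*b) = (1-t)*(hi-a) + t*(hi-b)" by (simp add: algebra_simps)
  have "(1-t)*(a-lo) + t*(b-lo) > 0 \<and> (1-t)*(hi-a) + t*(hi-b) > 0"
  proof (cases "t < 1")
    case True
    have "(1-t)*(a-lo) > 0" "(1-t)*(hi-a) > 0" using True assms by auto
    moreover have "t*(b-lo) \<ge> 0" "t*(hi-b) \<ge> 0" using assms by auto
    ultimately show ?thesis by linarith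
  next
    case False
    hence "t = 1" using assms by auto
    thus ?thesis using assms by auto
  qed
  thus ?thesis using e1 e2 by linarith
qed

lemma sq_conv:
  fixes a b t :: real assumes "0 \<le> t" "t \<le> 1"
  shows "((1-t)*a + t*b)^2 \<le> (1-t)*a^2 + t*b^2"
proof -
  have "(1-t)*a^2 + t*b^2 - ((1-t)*a + t*b)^2 = t*(1-t)*(a-b)^2"
    by (simp add: algebra_simps power2_eq_square)
  moreover have "t*(1-t)*(a-b)^2 \<ge> 0" using assms by auto
  ultimately show ?thesis by linarith
qed

lemma qf_pos: "0 < x \<Longrightarrow> x < 1 \<Longrightarrow> qf x > 0"
proof -
  assume a: "0 < x" "x < 1"
  have "x*(1-x) > 0" using a by auto
  moreover have "x*(1-x) < 1" using a mult_strict_mono[of x 1 "1-x" 1] by simp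
  ultimately show ?thesis unfolding qf_def by simp
qed

lemma kappa_qf: "0 < x \<Longrightarrow> x < 1 \<Longrightarrow> kappa x - 1/36 = 1 / (36 * qf x)"
proof -
  assume a: "0 < x" "x < 1"
  have p: "x*(1-x) > 0" using a by auto
  have "x*(1-x) < 1" using a mult_strict_mono[of x 1 "1-x" 1] by simp
  have g: "1 / (36 * p) - 1/36 = 1 / (36 * (p / (1 - p)))" if "0 < p" "p < 1" for p :: real
    using that by (simp add: field_simps)
  have "kappa x = 1 / (36 * (x*(1-x)))" unfolding kappa_def by (simp add: mult.assoc)
  thus ?thesis using g[of "x*(1-x)"] p \<open>x*(1-x) < 1\<close> unfolding qf_def by simp
qed

lemma qf_concave:
  fixes x y t :: real
  assumes "0 < x" "x < 1" "0 < y" "y < 1" "0 \<le> t" "t \<le> 1"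
  shows "(1-t)*qf x + t*qf y \<le> qf ((1-t)*x + t*y)"
proof -
  have "(\<lambda>u. - qf u) ((1-t)*x + t*y) \<le> (1-t) * (\<lambda>u. - qf u) x + t * (\<lambda>u. - qf u) y"
  proof (rule tangent_comb[where P = "\<lambda>u. 0 < u \<and> u < 1" and f' = "\<lambda>u. - ((1 - 2*u)/(1 - u*(1-u))^2)"])
    fix u v :: real assume "0 < u \<and> u < 1" "0 < v \<and> v < 1"
    thus "- qf u + - ((1 - 2*u)/(1 - u*(1-u))^2) * (v - u) \<le> - qf v"
      using qf_tan[of u v] by simp
  qed (use assms comb_between[of 0 x 1 y t] in auto)
  thus ?thesis by simp
qed

lemma kterm:
  fixes x y t d1 d2 :: real
  assumes "0 < x" "x < 1" "0 < y" "y < 1" "0 \<le> t" "t \<le> 1"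
  shows "(kappa ((1-t)*x + t*y) - 1/36) * ((1-t)*d1 + t*d2)^2
         \<le> (1-t) * ((kappa x - 1/36) * d1^2) + t * ((kappa y - 1/36) * d2^2)"
proof -
  define z where "z = (1-t)*x + t*y"
  have z: "0 < z" "z < 1" using comb_between[of 0 x 1 y t] assms unfolding z_def by auto
  define Q where "Q = (1-t)*qf x + t*qf y"
  have qx: "qf x > 0" and qy: "qf y > 0" using qf_pos assms by auto
  have Qpos: "Q > 0" unfolding Q_def
    using comb_between[of 0 "qf x" "qf x + qf y + 1" "qf y" t] qx qy assms by auto
  have Qz: "Q \<le> qf z" unfolding Q_def z_def using qf_concave assms by auto
  have "(kappa z - 1/36) * ((1-t)*d1 + t*d2)^2 = ((1-t)*d1 + t*d2)^2 / qf z / 36"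
    using kappa_qf z by simp
  also have "\<dots> \<le> ((1-t)*d1 + t*d2)^2 / Q / 36"
    using Qpos Qz by (intro divide_right_mono divide_left_mono) auto
  also have "\<dots> \<le> ((1-t)*d1^2/qf x + t*d2^2/qf y) / 36"
    unfolding Q_def using persp[of "qf x" "qf y" t d1 d2] qx qy assms by (intro divide_right_mono) auto
  also have "\<dots> = (1-t) * ((kappa x - 1/36) * d1^2) + t * ((kappa y - 1/36) * d2^2)"
    using kappa_qf assms by simp
  finally show ?thesis unfolding z_def .
qed

lemma gsum_comb:
  assumes "\<And>i j. f i j \<le> (1-t)*g i j + t*k i j"
  shows "gsum N f \<le> (1-t)*gsum N g + t*gsum N k"
proof -
  have "gsum N f \<le> gsum N (\<lambda>i j. (1-t)*g i j + t*k i j)"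
    unfolding gsum_def by (intro sum_mono assms)
  also have "\<dots> = (1-t)*gsum N g + t*gsum N k"
    unfolding gsum_def by (simp add: sum.distrib sum_distrib_left)
  finally show ?thesis .
qed

lemma gsum_neg: "gsum N (\<lambda>i j. - f i j) = - gsum N f"
  unfolding gsum_def by (simp add: sum_negf)

lemma cgf_scale:
  assumes "c \<ge> 0"
    and T: "\<And>\<phi> \<psi> t i j. \<phi> \<in> D \<Longrightarrow> \<psi> \<in> D \<Longrightarrow> 0 \<le> t \<Longrightarrow> t \<le> 1 \<Longrightarrow>
       T (\<lambda>i j. (1-t)*\<phi> i j + t*\<psi> i j) i j \<le> (1-t)*T \<phi> i j + t*T \<psi> i j"
  shows "convex_grid_fun D (\<lambda>\<phi>. c * gsum N (T \<phi>))"
  unfolding convex_grid_fun_def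
proof (intro ballI allI impI)
  fix \<phi> \<psi> and t :: real assume a: "\<phi> \<in> D" "\<psi> \<in> D" "0 \<le> t \<and> t \<le> 1"
  have "gsum N (T (\<lambda>i j. (1-t)*\<phi> i j + t*\<psi> i j)) \<le> (1-t)*gsum N (T \<phi>) + t*gsum N (T \<psi>)"
    using T a by (intro gsum_comb) auto
  hence "c * gsum N (T (\<lambda>i j. (1-t)*\<phi> i j + t*\<psi> i j)) \<le> c * ((1-t)*gsum N (T \<phi>) + t*gsum N (T \<psi>))"
    using assms(1) by (intro mult_left_mono) auto
  thus "c * gsum N (T (\<lambda>i j. (1-t)*\<phi> i j + t*\<psi> i j)) \<le> (1-t) * (c * gsum N (T \<phi>)) + t * (c * gsum N (T \<psi>))"
    by (simp add: algebra_simps)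
qed

lemma cgf_add:
  assumes "convex_grid_fun D F" "convex_grid_fun D G"
  shows "convex_grid_fun D (\<lambda>\<phi>. F \<phi> + G \<phi>)"
  unfolding convex_grid_fun_def
proof (intro ballI allI impI)
  fix \<phi> \<psi> and t :: real assume a: "\<phi> \<in> D" "\<psi> \<in> D" "0 \<le> t \<and> t \<le> 1"
  have "F (\<lambda>i j. (1-t)*\<phi> i j + t*\<psi> i j) \<le> (1-t) * F \<phi> + t * F \<psi>"
    using assms(1) a unfolding convex_grid_fun_def by blast
  moreover have "G (\<lambda>i j. (1-t)*\<phi> i j + t*\<psi> i j) \<le> (1-t) * G \<phi> + t * G \<psi>"
    using assms(2) a unfolding convex_grid_fun_def by blast
  ultimately show "F (\<lambda>i j. (1-t)*\<phi> i j + t*\<psi> i j) + G (\<lambda>i j. (1-t)*\<phi> i j + t*\<psi> i j)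
     \<le> (1-t) * (F \<phi> + G \<phi>) + t * (F \<psi> + G \<psi>)" by (simp add: algebra_simps)
qed

lemma Dx_comb: "Dx h (\<lambda>i j. (1-t)*\<phi> i j + t*\<psi> i j) a b = (1-t)*Dx h \<phi> a b + t*Dx h \<psi> a b"
  by (cases "h = 0") (simp_all add: Dx_def field_simps)

lemma Dy_comb: "Dy h (\<lambda>i j. (1-t)*\<phi> i j + t*\<psi> i j) a b = (1-t)*Dy h \<phi> a b + t*Dy h \<psi> a b"
  by (cases "h = 0") (simp_all add: Dy_def field_simps)

lemma gradsq_exp: "gradsq h \<phi> i j = ((Dx h \<phi> i j)^2 + (Dx h \<phi> (i-1) j)^2)/2 + ((Dy h \<phi> i j)^2 + (Dy h \<phi> i (j-1))^2)/2"
  unfolding gradsq_def ax_def ay_def by simp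

lemma avg4:
  fixes A1 A2 A3 A4 B1 B2 B3 B4 :: real
  assumes "A1 \<le> B1" "A2 \<le> B2" "A3 \<le> B3" "A4 \<le> B4"
  shows "(A1+A2)/2 + (A3+A4)/2 \<le> (B1+B2)/2 + (B3+B4)/2"
  using add_mono[OF add_mono[OF assms(1,2)] add_mono[OF assms(3,4)]] by (simp add: add_divide_distrib[symmetric])

lemma gradsq_conv:
  assumes "0 \<le> t" "t \<le> 1"
  shows "gradsq h (\<lambda>i j. (1-t)*\<phi> i j + t*\<psi> i j) i j \<le> (1-t) * gradsq h \<phi> i j + t * gradsq h \<psi> i j"
proof -
  have "gradsq h (\<lambda>i j. (1-t)*\<phi> i j + t*\<psi> i j) i j = 
    (((1-t)*Dx h \<phi> i j + t*Dx h \<psi> i j)^2 + ((1-t)*Dx h \<phi> (i-1) j + t*Dx h \<psi> (i-1) j)^2)/2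
  + (((1-t)*Dy h \<phi> i j + t*Dy h \<psi> i j)^2 + ((1-t)*Dy h \<phi> i (j-1) + t*Dy h \<psi> i (j-1))^2)/2"
    unfolding gradsq_exp Dx_comb Dy_comb ..
  moreover have "(1-t) * gradsq h \<phi> i j + t * gradsq h \<psi> i j =
    (((1-t)*(Dx h \<phi> i j)^2 + t*(Dx h \<psi> i j)^2) + ((1-t)*(Dx h \<phi> (i-1) j)^2 + t*(Dx h \<psi> (i-1) j)^2))/2
  + (((1-t)*(Dy h \<phi> i j)^2 + t*(Dy h \<psi> i j)^2) + ((1-t)*(Dy h \<phi> i (j-1))^2 + t*(Dy h \<psi> i (j-1))^2))/2"
    unfolding gradsq_exp by (simp add: field_simps)
  ultimately show ?thesis
    by (simp only:) (intro avg4 sq_conv assms)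
qed

lemma kgradsq_conv:
  assumes "0 \<le> t" "t \<le> 1" "0 < \<phi> i j" "\<phi> i j < 1" "0 < \<psi> i j" "\<psi> i j < 1"
  shows "(kappa ((1-t)*\<phi> i j + t*\<psi> i j) - 1/36) * gradsq h (\<lambda>i j. (1-t)*\<phi> i j + t*\<psi> i j) i j
     \<le> (1-t) * ((kappa (\<phi> i j) - 1/36) * gradsq h \<phi> i j) + t * ((kappa (\<psi> i j) - 1/36) * gradsq h \<psi> i j)"
proof -
  let ?k = "kappa ((1-t)*\<phi> i j + t*\<psi> i j) - 1/36"
  let ?k1 = "kappa (\<phi> i j) - 1/36"
  let ?k2 = "kappa (\<psi> i j) - 1/36"
  have "?k * gradsq h (\<lambda>i j. (1-t)*\<phi> i j + t*\<psi> i j) i j = 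
    (?k * ((1-t)*Dx h \<phi> i j + t*Dx h \<psi> i j)^2 + ?k * ((1-t)*Dx h \<phi> (i-1) j + t*Dx h \<psi> (i-1) j)^2)/2
  + (?k * ((1-t)*Dy h \<phi> i j + t*Dy h \<psi> i j)^2 + ?k * ((1-t)*Dy h \<phi> i (j-1) + t*Dy h \<psi> i (j-1))^2)/2"
    unfolding gradsq_exp Dx_comb Dy_comb by (simp add: algebra_simps)
  moreover have "(1-t) * (?k1 * gradsq h \<phi> i j) + t * (?k2 * gradsq h \<psi> i j) =
    (((1-t)*(?k1*(Dx h \<phi> i j)^2) + t*(?k2*(Dx h \<psi> i j)^2)) + ((1-t)*(?k1*(Dx h \<phi> (i-1) j)^2) + t*(?k2*(Dx h \<psi> (i-1) j)^2)))/2
  + (((1-t)*(?k1*(Dy h \<phi> i j)^2) + t*(?k2*(Dy h \<psi> i j)^2)) + ((1-t)*(?k1*(Dy h \<phi> i (j-1))^2) + t*(?k2*(Dy h \<psi> i (j-1))^2)))/2"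
    unfolding gradsq_exp by (simp add: field_simps)
  ultimately show ?thesis
    by (simp only:) (intro avg4 kterm assms)
qed

theorem lemma3p2:
  fixes N1 N2 \<chi> L :: real and N :: nat
  assumes "N1 > 0" and "N2 > 0" and "\<chi> > 0" and "L > 0" and "N > 0"
  shows "(\<forall>\<phi>\<in>Adm N1 N2 N.
            Fen N1 N2 \<chi> L N \<phi> = Fc N1 N2 L N \<phi> - Fe N1 N2 \<chi> L N \<phi> \<and>
            Fen N1 N2 \<chi> L N \<phi> = FS N1 N2 L N \<phi> + FK1 L N \<phi> + FK2 L N \<phi> - FH N1 N2 \<chi> L N \<phi>)
       \<and> convex_grid_set (Adm N1 N2 N)
       \<and> convex_grid_fun (Adm N1 N2 N) (Fc N1 N2 L N)
       \<and> convex_grid_fun (Adm N1 N2 N) (Fe N1 N2 \<chi> L N)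
       \<and> convex_grid_fun (Adm N1 N2 N) (FS N1 N2 L N)
       \<and> convex_grid_fun (Adm N1 N2 N) (FK1 L N)
       \<and> convex_grid_fun (Adm N1 N2 N) (FK2 L N)
       \<and> convex_grid_fun (Adm N1 N2 N) (FH N1 N2 \<chi> L N)"
proof -
  define h where "h = hstep L N"
  define \<rho> where "\<rho> = rho N1 N2"
  have taupos: "tau N1 N2 > 0" unfolding tau_def using assms by simp
  have alphapos: "alpha N1 N2 > 0" unfolding alpha_def
  proof -
    have "sqrt (N2 / pi) + N1 / 2 > 0" using assms
      by (metis add_nonneg_pos half_gt_zero pi_ge_zero real_sqrt_ge_zero zero_le_divide_iff less_eq_real_def)
    thus "0 < pi * (sqrt (N2 / pi) + N1 / 2)\<^sup>2" by simp
  qed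
  have betapos: "beta N1 N2 > 0" unfolding beta_def using alphapos assms by simp
  have rho1: "\<rho> > 1" unfolding \<rho>_def rho_def using taupos assms by simp
  have rinv: "1 / \<rho> < 1" using rho1 by simp
  have AdmD: "0 < \<phi> i j \<and> \<phi> i j < 1 / \<rho>" if "\<phi> \<in> Adm N1 N2 N" for \<phi> i j
    using that unfolding Adm_def \<rho>_def by auto
  have combD: "0 < (1-t)*\<phi> i j + t*\<psi> i j \<and> (1-t)*\<phi> i j + t*\<psi> i j < 1 / \<rho>"
    if "\<phi> \<in> Adm N1 N2 N" "\<psi> \<in> Adm N1 N2 N" "0 \<le> t" "t \<le> 1" for \<phi> \<psi> t i j
    using comb_between[of 0 "\<phi> i j" "1/\<rho>" "\<psi> i j" t] AdmD[OF that(1), of i j] AdmD[OF that(2), of i j] that(3,4)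
    by auto
  have ident: "Fen N1 N2 \<chi> L N \<phi> = FS N1 N2 L N \<phi> + FK1 L N \<phi> + FK2 L N \<phi> - FH N1 N2 \<chi> L N \<phi>" for \<phi>
  proof -
    have pt: "Sfun N1 N2 (\<phi> i j) + Hfun N1 N2 \<chi> (\<phi> i j) + kappa (\<phi> i j) * gradsq h \<phi> i j
       = Sfun N1 N2 (\<phi> i j) + ((kappa (\<phi> i j) - 1/36) * gradsq h \<phi> i j) + 1/36 * gradsq h \<phi> i j + Hfun N1 N2 \<chi> (\<phi> i j)" for i j
      by (simp add: algebra_simps)
    have "gsum N (\<lambda>i j. Sfun N1 N2 (\<phi> i j) + Hfun N1 N2 \<chi> (\<phi> i j) + kappa (\<phi> i j) * gradsq h \<phi> i j)
       = gsum N (\<lambda>i j. Sfun N1 N2 (\<phi> i j)) + gsum N (\<lambda>i j. (kappa (\<phi> i j) - 1/36) * gradsq h \<phi> i j)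
         + 1/36 * gsum N (\<lambda>i j. gradsq h \<phi> i j) + gsum N (\<lambda>i j. Hfun N1 N2 \<chi> (\<phi> i j))"
      unfolding pt gsum_def by (simp add: sum.distrib sum_distrib_left)
    moreover have "grad_norm_sq L N \<phi> = h^2 * gsum N (\<lambda>i j. gradsq h \<phi> i j)"
      unfolding grad_norm_sq_def gradsq_def h_def ..
    ultimately show ?thesis unfolding Fen_def FS_def FK1_def FK2_def FH_def h_def[symmetric]
      by (simp add: algebra_simps)
  qed
  have part1: "\<forall>\<phi>\<in>Adm N1 N2 N.
            Fen N1 N2 \<chi> L N \<phi> = Fc N1 N2 L N \<phi> - Fe N1 N2 \<chi> L N \<phi> \<and>
            Fen N1 N2 \<chi> L N \<phi> = FS N1 N2 L N \<phi> + FK1 L N \<phi> + FK2 L N \<phi> - FH N1 N2 \<chi> L N \<phi>"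
    using ident unfolding Fc_def Fe_def FH_def by simp
  have part2: "convex_grid_set (Adm N1 N2 N)"
    unfolding convex_grid_set_def
  proof (intro ballI allI impI)
    fix \<phi> \<psi> and t :: real assume a: "\<phi> \<in> Adm N1 N2 N" "\<psi> \<in> Adm N1 N2 N" "0 \<le> t \<and> t \<le> 1"
    have "per_grid N (\<lambda>i j. (1-t)*\<phi> i j + t*\<psi> i j)"
      using a(1,2) unfolding Adm_def Cper_def per_grid_def by auto
    thus "(\<lambda>i j. (1-t)*\<phi> i j + t*\<psi> i j) \<in> Adm N1 N2 N"
      using combD[OF a(1,2)] a(3) unfolding Adm_def Cper_def \<rho>_def by auto
  qed
  have Stan: "Sfun N1 N2 u + ((ln (alpha N1 N2 * u / tau N1 N2) + 1) / tau N1 N2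
      + (ln (beta N1 N2 * u / tau N1 N2) + 1) / N1 + (- \<rho> * (ln (1 - \<rho>*u) + 1))) * (v - u)
      \<le> Sfun N1 N2 v" if "0 < u \<and> u < 1/\<rho>" "0 < v \<and> v < 1/\<rho>" for u v
  proof -
    have r: "1 - \<rho>*u > 0" "1 - \<rho>*v > 0" using that rho1 by (simp_all add: field_simps)
    have p1: "u / tau N1 N2 * ln (alpha N1 N2 * u / tau N1 N2) + (ln (alpha N1 N2 * u / tau N1 N2) + 1) / tau N1 N2 * (v - u)
        \<le> v / tau N1 N2 * ln (alpha N1 N2 * v / tau N1 N2)"
      by (rule piece1_tan) (use taupos alphapos that in auto)
    have p2: "u / N1 * ln (beta N1 N2 * u / tau N1 N2) + (ln (beta N1 N2 * u / tau N1 N2) + 1) / N1 * (v - u)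
        \<le> v / N1 * ln (beta N1 N2 * v / tau N1 N2)"
      by (rule piece1_tan) (use taupos betapos assms that in auto)
    have p3: "(1 - \<rho>*u) * ln (1 - \<rho>*u) + (- \<rho> * (ln (1 - \<rho>*u) + 1)) * (v - u) \<le> (1 - \<rho>*v) * ln (1 - \<rho>*v)"
      by (rule piece3_tan) (use r in auto)
    have e: "\<And>a b c :: real. (a + b + c) * (v - u) = a * (v - u) + b * (v - u) + c * (v - u)"
      by (simp add: distrib_right)
    show ?thesis unfolding Sfun_def \<rho>_def[symmetric] e using p1 p2 p3 by linarith
  qed
  have FSc: "convex_grid_fun (Adm N1 N2 N) (FS N1 N2 L N)"
  proof -
    have "FS N1 N2 L N = (\<lambda>\<phi>. h^2 * gsum N ((\<lambda>\<phi> i j. Sfun N1 N2 (\<phi> i j)) \<phi>))"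
      unfolding FS_def h_def by simp
    note eq = this
    show ?thesis unfolding eq
    proof (rule cgf_scale)
      fix \<phi> \<psi> and t :: real and i j assume a: "\<phi> \<in> Adm N1 N2 N" "\<psi> \<in> Adm N1 N2 N" "0 \<le> t" "t \<le> 1"
      show "Sfun N1 N2 ((1-t)*\<phi> i j + t*\<psi> i j) \<le> (1-t) * Sfun N1 N2 (\<phi> i j) + t * Sfun N1 N2 (\<psi> i j)"
        by (rule tangent_comb[where P = "\<lambda>u. 0 < u \<and> u < 1/\<rho>", OF Stan])
           (use AdmD[OF a(1)] AdmD[OF a(2)] combD[OF a] a in auto)
    qed simp
  qed
  have Hc: "convex_grid_fun (Adm N1 N2 N) (\<lambda>\<phi>. - (h^2 * gsum N (\<lambda>i j. Hfun N1 N2 \<chi> (\<phi> i j))))"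
  proof -
    have "(\<lambda>\<phi>. - (h^2 * gsum N (\<lambda>i j. Hfun N1 N2 \<chi> (\<phi> i j))))
       = (\<lambda>\<phi>. h^2 * gsum N ((\<lambda>\<phi> i j. - Hfun N1 N2 \<chi> (\<phi> i j)) \<phi>))"
      by (simp add: gsum_neg)
    note eq = this
    show ?thesis unfolding eq
    proof (rule cgf_scale)
      fix \<phi> \<psi> and t :: real and i j assume a: "\<phi> \<in> Adm N1 N2 N" "\<psi> \<in> Adm N1 N2 N" "0 \<le> t" "t \<le> 1"
      have sq: "((1-t)*\<phi> i j + t*\<psi> i j)^2 \<le> (1-t)*(\<phi> i j)^2 + t*(\<psi> i j)^2"
        using sq_conv a by auto
      have c: "\<chi> * \<rho> \<ge> 0" using assms rho1 by simp
      have "\<chi> * \<rho> * ((1-t)*\<phi> i j + t*\<psi> i j)^2 \<le> \<chi> * \<rho> * ((1-t)*(\<phi> i j)^2 + t*(\<psi> i j)^2)"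
        using mult_left_mono[OF sq c] .
      thus "- Hfun N1 N2 \<chi> ((1-t)*\<phi> i j + t*\<psi> i j) \<le> (1-t) * - Hfun N1 N2 \<chi> (\<phi> i j) + t * - Hfun N1 N2 \<chi> (\<psi> i j)"
        unfolding Hfun_def \<rho>_def[symmetric] by (simp add: algebra_simps power2_eq_square)
    qed simp
  qed
  have Fec: "convex_grid_fun (Adm N1 N2 N) (Fe N1 N2 \<chi> L N)"
    using Hc unfolding Fe_def h_def by (simp add: fun_eq_iff)
  have FHc: "convex_grid_fun (Adm N1 N2 N) (FH N1 N2 \<chi> L N)"
    using Hc unfolding FH_def h_def by (simp add: fun_eq_iff)
  have FK1c: "convex_grid_fun (Adm N1 N2 N) (FK1 L N)"
  proof -
    have "FK1 L N = (\<lambda>\<phi>. h^2 * gsum N ((\<lambda>\<phi> i j. (kappa (\<phi> i j) - 1/36) * gradsq h \<phi> i j) \<phi>))"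
      unfolding FK1_def h_def by simp
    note eq = this
    show ?thesis unfolding eq
    proof (rule cgf_scale)
      fix \<phi> \<psi> and t :: real and i j assume a: "\<phi> \<in> Adm N1 N2 N" "\<psi> \<in> Adm N1 N2 N" "0 \<le> t" "t \<le> 1"
      show "(kappa ((1-t)*\<phi> i j + t*\<psi> i j) - 1/36) * gradsq h (\<lambda>i j. (1-t)*\<phi> i j + t*\<psi> i j) i j
     \<le> (1-t) * ((kappa (\<phi> i j) - 1/36) * gradsq h \<phi> i j) + t * ((kappa (\<psi> i j) - 1/36) * gradsq h \<psi> i j)"
        using kgradsq_conv[OF a(3,4)] AdmD[OF a(1), of i j] AdmD[OF a(2), of i j] rinv by auto
    qed simp
  qed
  have FK2c: "convex_grid_fun (Adm N1 N2 N) (FK2 L N)"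
  proof -
    have "FK2 L N = (\<lambda>\<phi>. (1/36 * h^2) * gsum N ((\<lambda>\<phi> i j. gradsq h \<phi> i j) \<phi>))"
      unfolding FK2_def grad_norm_sq_def h_def gradsq_def by (simp add: fun_eq_iff)
    note eq = this
    show ?thesis unfolding eq
    proof (rule cgf_scale)
      fix \<phi> \<psi> and t :: real and i j assume a: "\<phi> \<in> Adm N1 N2 N" "\<psi> \<in> Adm N1 N2 N" "0 \<le> t" "t \<le> 1"
      show "gradsq h (\<lambda>i j. (1-t)*\<phi> i j + t*\<psi> i j) i j \<le> (1-t) * gradsq h \<phi> i j + t * gradsq h \<psi> i j"
        using gradsq_conv a by auto
    qed simp
  qed
  have Fcc: "convex_grid_fun (Adm N1 N2 N) (Fc N1 N2 L N)"
  proof -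
    have "Fc N1 N2 L N = (\<lambda>\<phi>. (\<lambda>\<phi>. FS N1 N2 L N \<phi> + FK1 L N \<phi>) \<phi> + FK2 L N \<phi>)"
      unfolding Fc_def by simp
    note eq = this
    show ?thesis unfolding eq
      by (intro cgf_add FSc FK1c FK2c)
  qed
  show ?thesis using part1 part2 Fcc Fec FSc FK1c FK2c FHc by blast
qed

end
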